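(* Let $Z=\{(x_i,y_i)\}_{i=1,\dots,N}$ be a finite sample with $x_i\in\mathcal{X}$ and $y_i\in\{-1,1\}$, and let $h^t,h^s:\mathcal{X}\to\{-1,1\}$ be two classifiers (teacher and student). Assume $R_Z(h^t)>0$ and $R^{h^t}_{acc(h^t)}(h^s)>0$. Then $$R_{Z}(h^s)\leq R_{Z}(h^t)\iff \frac{R_{err(h^t)}^{h^t}(h^s)}{R_{acc(h^t)}^{h^t}(h^s)}\geq \frac{1}{R_{Z}(h^t)}-1.$$
   Context: For a finite nonempty (multi)set $S$ of labelled pairs $(x,y)$ and functions $f,g:\mathcal{X}\to\{-1,1\}$, define the empirical disagreement risk $R^{f}_{S}(g):=\frac{1}{|S|}\sum_{(x,y)\in S}\mathbb{1}[f(x)\neq g(x)]$, and the empirical risk $R_S(g):=\frac{1}{|S|}\sum_{(x,y)\in S}\mathbb{1}[y\neq g(x)]$. Here $\mathbb{1}[\cdot]$ is $1$ if the condition holds and $0$ otherwise. The sets $acc(h^t):=\{(x,y)\in Z : h^t(x)=y\}$ and $err(h^t):=\{(x,y)\in Z : h^t(x)\neq y\}$ are the sub-multisets of $Z$ on which the teacher is correct, respectively wrong. *)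

theory Defs
  imports Complex_Main "HOL-Library.Multiset"
begin

text \<open>Samples are finite multisets of labelled pairs (x, y) with labels y in {-1, 1} (as integers).\<close>

definition emp_risk :: "('x \<times> int) multiset \<Rightarrow> ('x \<Rightarrow> int) \<Rightarrow> real" where
  "emp_risk S g = (\<Sum>p\<in>#S. (if snd p \<noteq> g (fst p) then 1 else 0 :: real)) / real (size S)"

definition dis_risk :: "('x \<Rightarrow> int) \<Rightarrow> ('x \<times> int) multiset \<Rightarrow> ('x \<Rightarrow> int) \<Rightarrow> real" where
  "dis_risk f S g = (\<Sum>p\<in>#S. (if f (fst p) \<noteq> g (fst p) then 1 else 0 :: real)) / real (size S)"

definition acc :: "('x \<Rightarrow> int) \<Rightarrow> ('x \<times> int) multiset \<Rightarrow> ('x \<times> int) multiset" where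
  "acc h Z = filter_mset (\<lambda>p. h (fst p) = snd p) Z"

definition err :: "('x \<Rightarrow> int) \<Rightarrow> ('x \<times> int) multiset \<Rightarrow> ('x \<times> int) multiset" where
  "err h Z = filter_mset (\<lambda>p. h (fst p) \<noteq> snd p) Z"

end

theory Submission
  imports Defs
begin

lemma ind_sum: "(\<Sum>p\<in>#S. (if P p then 1 else 0 :: real)) = real (size (filter_mset P S))"
  by (induction S) auto

theorem theorem1:
  fixes Z :: "('x \<times> int) multiset" and ht hs :: "'x \<Rightarrow> int"
  assumes labels: "\<forall>p\<in>#Z. snd p \<in> {-1, 1}"
    and ht_range: "\<forall>x. ht x \<in> {-1, 1}"
    and hs_range: "\<forall>x. hs x \<in> {-1, 1}"
    and pos1: "emp_risk Z ht > 0"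
    and pos2: "dis_risk ht (acc ht Z) hs > 0"
  shows "emp_risk Z hs \<le> emp_risk Z ht \<longleftrightarrow>
         dis_risk ht (err ht Z) hs / dis_risk ht (acc ht Z) hs \<ge> 1 / emp_risk Z ht - 1"
proof -
  define A where "A = acc ht Z"
  define E where "E = err ht Z"
  have Zs: "Z = A + E" unfolding A_def E_def acc_def err_def by (simp add: multiset_partition)
  define g where "g = (\<lambda>p::'x \<times> int. (if ht (fst p) \<noteq> hs (fst p) then 1 else 0 :: real))"
  define a where "a = (\<Sum>p\<in>#A. g p)"
  define e where "e = (\<Sum>p\<in>#E. g p)"
  have g01: "\<And>p. g p = 0 \<or> g p = 1" unfolding g_def by auto
  have s1: "(\<Sum>p\<in>#A. (if snd p \<noteq> hs (fst p) then 1 else 0 :: real)) = a"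
    unfolding a_def g_def
    by (rule arg_cong[where f=sum_mset], rule image_mset_cong) (auto simp: A_def acc_def)
  have s2: "(\<Sum>p\<in>#E. (if snd p \<noteq> hs (fst p) then 1 else 0 :: real)) = (\<Sum>p\<in>#E. (1 - g p))"
  proof (rule arg_cong[where f=sum_mset], rule image_mset_cong)
    fix p assume "p \<in># E"
    then have "p \<in># Z" "ht (fst p) \<noteq> snd p" by (auto simp: E_def err_def)
    with labels ht_range[rule_format, of "fst p"] hs_range[rule_format, of "fst p"]
    show "(if snd p \<noteq> hs (fst p) then 1 else 0 :: real) = 1 - g p"
      unfolding g_def by auto
  qed
  have s2': "(\<Sum>p\<in>#E. (1 - g p)) = real (size E) - e"
    unfolding e_def by (induction E) auto
  have t1: "(\<Sum>p\<in>#A. (if snd p \<noteq> ht (fst p) then 1 else 0 :: real)) = 0"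
    by (rule sum_mset.neutral) (auto simp: A_def acc_def)
  have t2: "(\<Sum>p\<in>#E. (if snd p \<noteq> ht (fst p) then 1 else 0 :: real)) = real (size E)"
    proof -
    have "filter_mset (\<lambda>p. snd p \<noteq> ht (fst p)) E = E"
      unfolding E_def err_def by (simp add: filter_filter_mset) (metis (mono_tags, lifting))
    then show ?thesis by (simp add: ind_sum)
  qed
  define N where "N = real (size Z)"
  have N: "N = real (size A) + real (size E)" using Zs N_def by simp
  have rhs: "emp_risk Z hs = (a + real (size E) - e) / N"
    unfolding emp_risk_def N_def using s1 s2 s2' by (subst (1) Zs) (simp add: Zs)
  have rht: "emp_risk Z ht = real (size E) / N"
    unfolding emp_risk_def N_def using t1 t2 by (subst (1) Zs) (simp add: Zs)
  have da: "dis_risk ht (acc ht Z) hs = a / real (size A)"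
    unfolding dis_risk_def a_def A_def g_def by simp
  have de: "dis_risk ht (err ht Z) hs = e / real (size E)"
    unfolding dis_risk_def e_def E_def g_def by simp
  have Npos: "N > 0" using pos1 rht
    by (metis N_def divide_eq_0_iff less_numeral_extra(3) of_nat_0 size_eq_0_iff_empty Zs zero_less_iff_neq_zero of_nat_0_less_iff)
  have Epos: "real (size E) > 0" using pos1 rht Npos by (simp add: zero_less_divide_iff)
  have apos: "a > 0" and Apos: "real (size A) > 0" using pos2 da
    by (auto simp: zero_less_divide_iff a_def g_def ind_sum)
  have "1 / emp_risk Z ht - 1 = real (size A) / real (size E)"
    unfolding rht N using Epos Npos N by (auto simp: add_divide_distrib)
  moreover have "(e / real (size E)) / (a / real (size A)) \<ge> real (size A) / real (size E) \<longleftrightarrow> a \<le> e"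
    using Epos apos Apos by (auto simp: field_simps)
  moreover have "emp_risk Z hs \<le> emp_risk Z ht \<longleftrightarrow> a \<le> e"
    unfolding rhs rht using Npos by (simp add: divide_le_cancel)
  ultimately show ?thesis using da de by simp
qed

end
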